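(* Let $(\mathcal{V},\mathcal{E})$ be a finite connected undirected graph that is a tree (each edge usable in both directions, so $(i,j)\in\mathcal{E}$ iff $(j,i)\in\mathcal{E}$), and for $i\in\mathcal{V}$ let $\mathrm{ne}(i)$ be the set of neighbours of $i$ (excluding $i$). Let $\{F^{v}\}_{v\in\mathcal{V}}$ be $d\times d$ matrices. For every ordered edge $(i,j)\in\mathcal{E}$ let $\theta^{i,j}\in\mathbb{R}^{d}$ be given, set $\theta^{i,i}=0$ for all $i$, and for arbitrary nodes $i,j$ joined by the unique tree path $i=j_0,j_1,\dots,j_{m+1}=j$ define $\theta^{i,j}=\theta^{j_0,j_1}+\theta^{j_1,j_2}+\dots+\theta^{j_m,j_{m+1}}$. Define messages for every ordered edge $(i,j)\in\mathcal{E}$ by $m_{1}^{i,j}=F^{i}$, $\ddot m_{1}^{i,j}=F^{i}\theta^{j,i}$, and for $k=2,\dots,K$: $$m_{k}^{i,j}=F^{i}+\sum_{p\in\mathrm{ne}(i)\setminus\{j\}}m_{k-1}^{p,i},\qquad \ddot m_{k}^{i,j}=m_{k}^{i,j}\theta^{j,i}+\sum_{p\in\mathrm{ne}(i)\setminus\{j\}}\ddot m_{k-1}^{p,i}.$$ If $K$ is at least the number of edges on the path between the two farthest nodes of the network (the diameter of the tree), then for every node $r\in\mathcal{V}$, $$\sum_{v\in\mathcal{V}}F^{v}=F^{r}+\sum_{j\in\mathrm{ne}(r)}m_{K}^{j,r}\qquad\text{and}\qquad \sum_{v\in\mathcal{V}}F^{v}\theta^{r,v}=\sum_{j\in\mathrm{ne}(r)}\ddot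 m_{K}^{j,r}.$$
   Context: This is the message-passing scheme of a sensor network at a fixed time $n$ (the time index is suppressed): $\theta^{i,j}$ plays the role of the (estimated) position of node $i$ in the local coordinate system of node $j$, and the additivity of $\theta$ along paths is the relation $\theta^{i,j}=\theta^{i,j_1}+\theta^{j_1,j_2}+\dots+\theta^{j_m,j}$ for nodes connected through intermediate nodes $j_1,\dots,j_m$. The message $m_k^{i,j}$, $\ddot m_k^{i,j}$ is the one sent from node $i$ to node $j$ at iteration $k$. *)

theory Defs
  imports "HOL-Analysis.Analysis"
begin

definition is_walk :: "('v \<Rightarrow> 'v \<Rightarrow> bool) \<Rightarrow> 'v list \<Rightarrow> bool" where
  "is_walk E ps \<longleftrightarrow> ps \<noteq> [] \<and> (\<forall>k. Suc k < length ps \<longrightarrow> E (ps ! k) (ps ! Suc k))"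

definition is_path :: "('v \<Rightarrow> 'v \<Rightarrow> bool) \<Rightarrow> 'v \<Rightarrow> 'v \<Rightarrow> 'v list \<Rightarrow> bool" where
  "is_path E i j ps \<longleftrightarrow> is_walk E ps \<and> distinct ps \<and> hd ps = i \<and> last ps = j"

definition is_cycle :: "('v \<Rightarrow> 'v \<Rightarrow> bool) \<Rightarrow> 'v list \<Rightarrow> bool" where
  "is_cycle E cs \<longleftrightarrow> length cs \<ge> 3 \<and> is_walk E cs \<and> distinct cs \<and> E (last cs) (hd cs)"

definition is_tree :: "'v set \<Rightarrow> ('v \<Rightarrow> 'v \<Rightarrow> bool) \<Rightarrow> bool" where
  "is_tree V E \<longleftrightarrow> finite V \<and> V \<noteq> {}
     \<and> (\<forall>i j. E i j \<longrightarrow> i \<in> V \<and> j \<in> V)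
     \<and> (\<forall>i j. E i j \<longleftrightarrow> E j i)
     \<and> (\<forall>i. \<not> E i i)
     \<and> (\<forall>i\<in>V. \<forall>j\<in>V. \<exists>ps. is_path E i j ps)
     \<and> (\<nexists>cs. is_cycle E cs)"

definition ne :: "'v set \<Rightarrow> ('v \<Rightarrow> 'v \<Rightarrow> bool) \<Rightarrow> 'v \<Rightarrow> 'v set" where
  "ne V E i = {p \<in> V. E i p \<and> p \<noteq> i}"

definition tree_path :: "('v \<Rightarrow> 'v \<Rightarrow> bool) \<Rightarrow> 'v \<Rightarrow> 'v \<Rightarrow> 'v list" where
  "tree_path E i j = (THE ps. is_path E i j ps)"

definition tree_dist :: "('v \<Rightarrow> 'v \<Rightarrow> bool) \<Rightarrow> 'v \<Rightarrow> 'v \<Rightarrow> nat" where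
  "tree_dist E i j = length (tree_path E i j) - 1"

definition diameter :: "'v set \<Rightarrow> ('v \<Rightarrow> 'v \<Rightarrow> bool) \<Rightarrow> nat" where
  "diameter V E = Max {tree_dist E i j | i j. i \<in> V \<and> j \<in> V}"

text \<open>theta extended additively along the tree path (theta^{i,i} = 0: empty sum).\<close>
definition theta_path :: "('v \<Rightarrow> 'v \<Rightarrow> bool) \<Rightarrow> ('v \<Rightarrow> 'v \<Rightarrow> real^'d) \<Rightarrow> 'v \<Rightarrow> 'v \<Rightarrow> real^'d" where
  "theta_path E \<theta> i j =
     (let ps = tree_path E i j in \<Sum>k<length ps - 1. \<theta> (ps ! k) (ps ! Suc k))"

text \<open>Messages m_k^{i,j} (k \<ge> 1; the value at k = 0 is an unused convention).\<close>
fun msgM :: "'v set \<Rightarrow> ('v \<Rightarrow> 'v \<Rightarrow> bool) \<Rightarrow> ('v \<Rightarrow> real^'d^'d) \<Rightarrow> nat \<Rightarrow> 'v \<Rightarrow> 'v \<Rightarrow> real^'d^'d" where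
  "msgM V E F 0 i j = 0"
| "msgM V E F (Suc 0) i j = F i"
| "msgM V E F (Suc (Suc k)) i j = F i + (\<Sum>p\<in>ne V E i - {j}. msgM V E F (Suc k) p i)"

fun msgD :: "'v set \<Rightarrow> ('v \<Rightarrow> 'v \<Rightarrow> bool) \<Rightarrow> ('v \<Rightarrow> real^'d^'d) \<Rightarrow> ('v \<Rightarrow> 'v \<Rightarrow> real^'d)
             \<Rightarrow> nat \<Rightarrow> 'v \<Rightarrow> 'v \<Rightarrow> real^'d" where
  "msgD V E F \<theta> 0 i j = 0"
| "msgD V E F \<theta> (Suc 0) i j = F i *v \<theta> j i"
| "msgD V E F \<theta> (Suc (Suc k)) i j =
     msgM V E F (Suc (Suc k)) i j *v \<theta> j i + (\<Sum>p\<in>ne V E i - {j}. msgD V E F \<theta> (Suc k) p i)"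

end

theory Submission
  imports Defs
begin

lemma sum_mvmult: "finite S \<Longrightarrow> (\<Sum>v\<in>S. (A v :: real^'d^'d)) *v x = (\<Sum>v\<in>S. A v *v x)"
  by (induction S rule: finite_induct) (auto simp: matrix_vector_mult_add_rdistrib)

lemma is_walk_Nil[simp]: "\<not> is_walk E []"
  by (simp add: is_walk_def)

lemma is_walk_single[simp]: "is_walk E [x]"
  by (simp add: is_walk_def)

lemma allk_Cons:
  "(\<forall>k. Suc k < length (x#ys) \<longrightarrow> Q ((x#ys)!k) ((x#ys)!Suc k)) \<longleftrightarrow>
   (ys \<noteq> [] \<longrightarrow> Q x (hd ys)) \<and> (\<forall>k. Suc k < length ys \<longrightarrow> Q (ys!k) (ys!Suc k))"
proof (intro iffI conjI impI allI)
  assume a: "\<forall>k. Suc k < length (x#ys) \<longrightarrow> Q ((x#ys)!k) ((x#ys)!Suc k)" and "ys \<noteq> []"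
  then show "Q x (hd ys)" using a[rule_format, of 0] by (cases ys) auto
next
  fix k
  assume a: "\<forall>k. Suc k < length (x#ys) \<longrightarrow> Q ((x#ys)!k) ((x#ys)!Suc k)" and "Suc k < length ys"
  then show "Q (ys!k) (ys!Suc k)" using a[rule_format, of "Suc k"] by simp
next
  fix k
  assume a: "(ys \<noteq> [] \<longrightarrow> Q x (hd ys)) \<and> (\<forall>k. Suc k < length ys \<longrightarrow> Q (ys!k) (ys!Suc k))"
    and b: "Suc k < length (x#ys)"
  show "Q ((x#ys)!k) ((x#ys)!Suc k)"
  proof (cases k)
    case 0 then show ?thesis using a b by (cases ys) auto
  next
    case (Suc m) then show ?thesis using a b by simp
  qed
qed

lemma is_walk_Cons2[simp]: "is_walk E (x#y#xs) \<longleftrightarrow> E x y \<and> is_walk E (y#xs)"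
  unfolding is_walk_def allk_Cons[of x "y#xs" E] by simp

lemma is_walk_Cons: "xs \<noteq> [] \<Longrightarrow> is_walk E (x#xs) \<longleftrightarrow> E x (hd xs) \<and> is_walk E xs"
  by (cases xs) auto

lemma is_walk_append:
  "xs \<noteq> [] \<Longrightarrow> ys \<noteq> [] \<Longrightarrow> is_walk E (xs @ ys) \<longleftrightarrow> is_walk E xs \<and> is_walk E ys \<and> E (last xs) (hd ys)"
proof (induction xs)
  case Nil then show ?case by simp
next
  case (Cons a xs)
  show ?case
  proof (cases "xs = []")
    case True
    have "is_walk E ((a # xs) @ ys) = (E a (hd ys) \<and> is_walk E ys)"
      using True Cons.prems(2) is_walk_Cons[of ys E a] by simp
    then show ?thesis using True by auto
  next
    case False
    have 1: "is_walk E ((a # xs) @ ys) = (E a (hd xs) \<and> is_walk E (xs @ ys))"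
      using False is_walk_Cons[of "xs @ ys" E a] by simp
    have 2: "is_walk E (a # xs) = (E a (hd xs) \<and> is_walk E xs)"
      using False is_walk_Cons[of xs E a] by simp
    have 3: "last (a # xs) = last xs" using False by simp
    show ?thesis unfolding 1 2 3 Cons.IH[OF False Cons.prems(2)] by blast
  qed
qed

lemma is_walk_rev:
  assumes "\<forall>i j. E i j \<longleftrightarrow> E j i"
  shows "is_walk E (rev xs) \<longleftrightarrow> is_walk E xs"
proof (induction xs)
  case Nil then show ?case by simp
next
  case (Cons a xs)
  show ?case
  proof (cases "xs = []")
    case True then show ?thesis by simp
  next
    case False
    have 1: "is_walk E (rev (a # xs)) = (is_walk E (rev xs) \<and> E (hd xs) a)"
      using False is_walk_append[of "rev xs" "[a]" E] by (simp add: last_rev)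
    have 2: "is_walk E (a # xs) = (E a (hd xs) \<and> is_walk E xs)"
      using False is_walk_Cons[of xs E a] by simp
    show ?thesis using 1 2 Cons.IH assms by blast
  qed
qed

lemma is_walk_prefix: "is_walk E (xs @ ys) \<Longrightarrow> xs \<noteq> [] \<Longrightarrow> is_walk E xs"
  by (cases "ys = []") (auto simp: is_walk_append)

lemma is_path_Cons_intro:
  "is_path E w v ps \<Longrightarrow> E u w \<Longrightarrow> u \<notin> set ps \<Longrightarrow> is_path E u v (u # ps)"
  unfolding is_path_def by (cases ps) auto

lemma is_path_Cons_iff:
  "is_path E u v (x # w # xs) \<longleftrightarrow> x = u \<and> E u w \<and> u \<notin> set (w#xs) \<and> is_path E w v (w#xs)"
  unfolding is_path_def by auto

lemma is_path_single: "is_path E u v [x] \<longleftrightarrow> x = u \<and> u = v"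
  unfolding is_path_def by auto

lemma is_path_basic: "is_path E u v ps \<Longrightarrow> ps \<noteq> [] \<and> hd ps = u \<and> last ps = v \<and> distinct ps \<and> is_walk E ps"
  unfolding is_path_def by auto

lemma path_unique:
  assumes sym: "\<forall>i j. E i j \<longleftrightarrow> E j i" and nocyc: "\<nexists>cs. is_cycle E cs"
  shows "is_path E u v ps \<Longrightarrow> is_path E u v qs \<Longrightarrow> ps = qs"
proof (induction ps arbitrary: u qs)
  case Nil then show ?case by (simp add: is_path_def)
next
  case (Cons x ps')
  have xu: "x = u" using Cons.prems(1) by (simp add: is_path_def)
  obtain qs' where qs: "qs = u # qs'"
    using Cons.prems(2) by (cases qs) (auto simp: is_path_def)
  show ?case
  proof (cases "ps' = []")
    case True
    then have uv: "u = v" using Cons.prems(1) xu by (simp add: is_path_single)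
    have "qs' = []"
    proof (rule ccontr)
      assume "qs' \<noteq> []"
      then have "last qs' = v" "distinct (u#qs')" using Cons.prems(2) qs by (auto simp: is_path_def)
      with \<open>qs' \<noteq> []\<close> uv show False by (metis distinct.simps(2) last_in_set)
    qed
    then show ?thesis using True xu qs by simp
  next
    case False
    have "qs' \<noteq> []"
    proof
      assume "qs' = []"
      then have uv: "u = v" using Cons.prems(2) qs by (simp add: is_path_single)
      have "last ps' = v" "distinct (u#ps')" using Cons.prems(1) xu False by (auto simp: is_path_def)
      with False uv show False by (metis distinct.simps(2) last_in_set)
    qed
    obtain w1 r1 where p1: "ps' = w1 # r1" using False by (cases ps') auto
    obtain w2 r2 where p2: "qs' = w2 # r2" using \<open>qs' \<noteq> []\<close> by (cases qs') auto
    have P1: "E u w1" "u \<notin> set ps'" "is_path E w1 v ps'"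
      using Cons.prems(1) xu p1 by (auto simp: is_path_Cons_iff)
    have P2: "E u w2" "u \<notin> set qs'" "is_path E w2 v qs'"
      using Cons.prems(2) qs p2 by (auto simp: is_path_Cons_iff)
    show ?thesis
    proof (cases "w1 = w2")
      case True
      then have "ps' = qs'" using Cons.IH P1(3) P2(3) by simp
      then show ?thesis using xu qs by simp
    next
      case False
      have "v \<in> set qs'" using P2(3) by (metis is_path_basic last_in_set)
      moreover have "v \<in> set ps'" using P1(3) by (metis is_path_basic last_in_set)
      ultimately have "\<exists>y\<in>set ps'. y \<in> set qs'" by blast
      then obtain a1 z a2 where A: "ps' = a1 @ z # a2" "z \<in> set qs'" "\<forall>y\<in>set a1. y \<notin> set qs'"
        using split_list_first_prop[of ps' "\<lambda>y. y \<in> set qs'"] by blast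
      obtain b1 b2 where B: "qs' = b1 @ z # b2" using A(2) by (meson split_list)
      define cs where "cs = u # a1 @ z # rev b1"
      have dps: "distinct (u#ps')" "distinct (u#qs')" using Cons.prems xu qs
        by (auto simp: is_path_def)
      have wps: "is_walk E (u#ps')" "is_walk E (u#qs')" using Cons.prems xu qs
        by (auto simp: is_path_def)
      have len: "length cs \<ge> 3"
      proof -
        have "a1 \<noteq> [] \<or> b1 \<noteq> []"
        proof (rule ccontr)
          assume "\<not> (a1 \<noteq> [] \<or> b1 \<noteq> [])"
          then have "w1 = z" "w2 = z" using A(1) B p1 p2 by auto
          then show False using False by simp
        qed
        then show ?thesis unfolding cs_def by (cases a1; cases b1) auto
      qed
      have w1: "is_walk E ((u # a1) @ [z])"
        using wps(1) A(1) is_walk_prefix[of E "(u # a1) @ [z]" a2] by simp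
      have w2: "is_walk E (b1 @ [z])"
        using wps(2) B is_walk_prefix[of E "b1 @ [z]" b2] is_walk_Cons[of qs' E u] \<open>qs' \<noteq> []\<close>
        by simp
      then have w2': "is_walk E (z # rev b1)" using is_walk_rev[OF sym, of "b1 @ [z]"] by simp
      have e1: "E (last (u#a1)) z" and w1': "is_walk E (u#a1)"
        using w1 is_walk_append[of "u#a1" "[z]" E] by auto
      have walk: "is_walk E cs"
        unfolding cs_def using is_walk_append[of "u#a1" "z # rev b1" E] e1 w1' w2' by simp
      have dist: "distinct cs"
        unfolding cs_def using dps A B by auto
      have lastcs: "last cs = w2"
        unfolding cs_def using B p2 by (cases b1) (auto simp: last_rev)
      have "E (last cs) (hd cs)" using lastcs P2(1) sym unfolding cs_def by auto
      then have "is_cycle E cs" using len walk dist by (simp add: is_cycle_def)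
      then show ?thesis using nocyc by blast
    qed
  qed
qed

locale tr =
  fixes V :: "'v set" and E :: "'v \<Rightarrow> 'v \<Rightarrow> bool"
  assumes T: "is_tree V E"
begin

lemma fin: "finite V" and inV: "E i j \<Longrightarrow> i \<in> V \<and> j \<in> V" and sym: "\<forall>i j. E i j \<longleftrightarrow> E j i"
  and irr: "\<not> E i i" and conn: "i \<in> V \<Longrightarrow> j \<in> V \<Longrightarrow> \<exists>ps. is_path E i j ps"
  and nocyc: "\<nexists>cs. is_cycle E cs"
  using T unfolding is_tree_def by auto

abbreviation P where "P \<equiv> tree_path E"

lemma P_eq: "is_path E u v ps \<Longrightarrow> P u v = ps"
  unfolding tree_path_def using path_unique[OF sym nocyc] by blast

lemma P_path: "u \<in> V \<Longrightarrow> v \<in> V \<Longrightarrow> is_path E u v (P u v)"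
  proof -
  assume a: "u \<in> V" "v \<in> V"
  obtain ps where "is_path E u v ps" using conn[OF a] by blast
  then show ?thesis using P_eq by simp
qed

lemma P_self: "P u u = [u]"
  by (rule P_eq) (simp add: is_path_single)

lemma P_edge: "E u v \<Longrightarrow> P u v = [u, v]"
  by (rule P_eq) (use irr in \<open>auto simp: is_path_def\<close>)

abbreviation D where "D \<equiv> tree_dist E"

lemma decompose:
  assumes "u \<in> V" "v \<in> V" "v \<noteq> u"
  shows "\<exists>w. E u w \<and> P u v = u # P w v \<and> u \<notin> set (P w v)"
proof -
  have p: "is_path E u v (P u v)" using P_path assms by simp
  then obtain rest where r: "P u v = u # rest" by (cases "P u v") (auto simp: is_path_def)
  have "rest \<noteq> []" using p r assms(3) by (auto simp: is_path_single)
  then obtain w rs where "rest = w # rs" by (cases rest) auto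
  then have "E u w" "u \<notin> set rest" "is_path E w v rest" using p r by (auto simp: is_path_Cons_iff)
  then show ?thesis using P_eq r by metis
qed

lemma extend:
  assumes "E j i" "v \<in> V" "j \<notin> set (P i v)"
  shows "P j v = j # P i v"
proof -
  have "i \<in> V" using inV assms(1) by auto
  then have "is_path E i v (P i v)" using P_path assms by simp
  then have "is_path E j v (j # P i v)" using is_path_Cons_intro assms by metis
  then show ?thesis by (rule P_eq)
qed

definition Tr where "Tr i j = {v \<in> V. j \<notin> set (P i v)}"

lemma ne_iff: "p \<in> ne V E i \<longleftrightarrow> E i p"
  unfolding ne_def using inV irr by auto

lemma fin_ne: "finite (ne V E i)"
  unfolding ne_def using fin by simp

lemma fin_Tr: "finite (Tr i j)"
  unfolding Tr_def using fin by simp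

lemma hdP: "u \<in> V \<Longrightarrow> v \<in> V \<Longrightarrow> u \<in> set (P u v) \<and> v \<in> set (P u v) \<and> hd (P u v) = u"
  using P_path[of u v] by (metis is_path_basic last_in_set hd_in_set)

lemma part1:
  assumes "u \<in> V" "v \<in> V" "v \<noteq> u"
  shows "\<exists>p\<in>ne V E u. v \<in> Tr p u"
proof -
  obtain w where "E u w" "P u v = u # P w v" "u \<notin> set (P w v)"
    using decompose assms by blast
  then show ?thesis using assms ne_iff unfolding Tr_def by blast
qed

lemma partition:
  assumes "u \<in> V"
  shows "V = insert u (\<Union>p\<in>ne V E u. Tr p u)"
    and "u \<notin> (\<Union>p\<in>ne V E u. Tr p u)"
    and "p \<in> ne V E u \<Longrightarrow> q \<in> ne V E u \<Longrightarrow> p \<noteq> q \<Longrightarrow> Tr p u \<inter> Tr q u = {}"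
proof -
  show "V = insert u (\<Union>p\<in>ne V E u. Tr p u)"
  proof
    show "V \<subseteq> insert u (\<Union>p\<in>ne V E u. Tr p u)"
    proof
      fix v assume v: "v \<in> V"
      show "v \<in> insert u (\<Union>p\<in>ne V E u. Tr p u)"
      proof (cases "v = u")
        case False
        then show ?thesis using part1[OF assms v] by blast
      qed simp
    qed
    show "insert u (\<Union>p\<in>ne V E u. Tr p u) \<subseteq> V" using assms unfolding Tr_def by auto
  qed
  show "u \<notin> (\<Union>p\<in>ne V E u. Tr p u)"
  proof
    assume "u \<in> (\<Union>p\<in>ne V E u. Tr p u)"
    then obtain p where p: "p \<in> ne V E u" "u \<notin> set (P p u)" unfolding Tr_def by blast
    have "p \<in> V" using p(1) unfolding ne_def by simp
    then show False using hdP[of p u] assms p(2) by simp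
  qed
  assume pq: "p \<in> ne V E u" "q \<in> ne V E u" "p \<noteq> q"
  show "Tr p u \<inter> Tr q u = {}"
  proof (rule ccontr)
    assume "Tr p u \<inter> Tr q u \<noteq> {}"
    then obtain v where v: "v \<in> V" "u \<notin> set (P p v)" "u \<notin> set (P q v)" unfolding Tr_def by blast
    have "E u p" "E u q" using pq ne_iff by auto
    then have "P u v = u # P p v" "P u v = u # P q v"
      using extend[of u p v] extend[of u q v] v by auto
    then have "hd (P p v) = hd (P q v)" by simp
    moreover have "p \<in> V" "q \<in> V" using pq unfolding ne_def by auto
    ultimately show False using hdP[of p v] hdP[of q v] v pq(3) by simp
  qed
qed

lemma prefix_path:
  assumes "is_path E p v (a @ j # b)"
  shows "is_path E p j (a @ [j])"
proof -
  have "is_walk E ((a @ [j]) @ b)" "distinct (a @ j # b)" "hd (a @ j # b) = p"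
    using assms by (auto simp: is_path_def)
  then show ?thesis unfolding is_path_def using is_walk_prefix[of E "a @ [j]" b]
    by (cases a) auto
qed

lemma subtree:
  assumes e: "E i j"
  shows "Tr i j = insert i (\<Union>p\<in>ne V E i - {j}. Tr p i)"
proof -
  have iV: "i \<in> V" "j \<in> V" using inV e by auto
  have ij: "i \<noteq> j" using irr e by auto
  show ?thesis
  proof
    show "Tr i j \<subseteq> insert i (\<Union>p\<in>ne V E i - {j}. Tr p i)"
    proof
      fix v assume v: "v \<in> Tr i j"
      then have vV: "v \<in> V" "j \<notin> set (P i v)" unfolding Tr_def by auto
      show "v \<in> insert i (\<Union>p\<in>ne V E i - {j}. Tr p i)"
      proof (cases "v = i")
        case False
        then obtain p where p: "p \<in> ne V E i" "v \<in> Tr p i" using part1[OF iV(1) vV(1)] by blast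
        have "p \<noteq> j"
        proof
          assume "p = j"
          then have "P i v = i # P j v" using extend[of i j v] e sym p(2) vV unfolding Tr_def by auto
          then show False using vV hdP[of j v] iV by simp
        qed
        then show ?thesis using p by blast
      qed simp
    qed
    show "insert i (\<Union>p\<in>ne V E i - {j}. Tr p i) \<subseteq> Tr i j"
    proof
      fix v assume "v \<in> insert i (\<Union>p\<in>ne V E i - {j}. Tr p i)"
      then consider "v = i" | p where "p \<in> ne V E i" "p \<noteq> j" "v \<in> Tr p i" by blast
      then show "v \<in> Tr i j"
      proof cases
        case 1 then show ?thesis using iV ij P_self unfolding Tr_def by auto
      next
        case 2
        have epi: "E i p" using 2 ne_iff by auto
        have vV: "v \<in> V" "i \<notin> set (P p v)" using 2 unfolding Tr_def by auto
        have Piv: "P i v = i # P p v" using extend epi vV by auto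
        have "j \<notin> set (P p v)"
        proof
          assume "j \<in> set (P p v)"
          then obtain a b where ab: "P p v = a @ j # b" by (meson split_list)
          have pV: "p \<in> V" using inV epi by auto
          have "is_path E p j (a @ [j])" using prefix_path P_path[OF pV vV(1)] ab by metis
          moreover have "i \<notin> set (a @ [j])" using vV ab by auto
          moreover have "hd (a @ [j]) = p" using calculation(1) by (simp add: is_path_def)
          ultimately have "is_path E i j (i # a @ [j])"
            using is_path_Cons_intro[of E p j "a @ [j]" i] epi by simp
          then have "[i, j] = i # a @ [j]" using P_eq P_edge e by metis
          then have "a = []" by simp
          then have "hd (P p v) = j" using ab by simp
          then show False using hdP[of p v] pV vV 2 by simp
        qed
        then show ?thesis using Piv vV ij unfolding Tr_def by auto
      qed
    qed
  qed
qed


lemma D_self: "D u u = 0"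
  unfolding tree_dist_def P_self by simp

lemma D_Tr:
  assumes "E i p" "v \<in> Tr p i"
  shows "D i v = Suc (D p v)"
proof -
  have vV: "v \<in> V" "i \<notin> set (P p v)" using assms(2) unfolding Tr_def by auto
  have pV: "p \<in> V" using inV assms(1) by auto
  have "P i v = i # P p v" using extend assms(1) vV by auto
  moreover have "P p v \<noteq> []" using hdP[OF pV vV(1)] by auto
  ultimately show ?thesis unfolding tree_dist_def by simp
qed

lemma D_zero:
  assumes "u \<in> V" "v \<in> V" "D u v = 0"
  shows "v = u"
proof -
  have p: "is_path E u v (P u v)" using P_path assms by simp
  then have "P u v \<noteq> []" "length (P u v) \<le> 1" using assms(3) unfolding tree_dist_def
    by (auto simp: is_path_def)
  then obtain x where "P u v = [x]" by (cases "P u v") auto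
  then show ?thesis using p by (simp add: is_path_single)
qed

lemma Tr_sub: "Tr i j \<subseteq> V" unfolding Tr_def by auto

lemma i_in_Tr: "E i j \<Longrightarrow> i \<in> Tr i j"
  using subtree by blast

lemma sum_step:
  assumes e: "E i j"
  shows "(\<Sum>v\<in>{v\<in>Tr i j. D i v < Suc (Suc n)}. g v)
       = g i + (\<Sum>p\<in>ne V E i - {j}. \<Sum>v\<in>{v\<in>Tr p i. D p v < Suc n}. g v)"
proof -
  have iV: "i \<in> V" using inV e by auto
  have seq: "{v\<in>Tr i j. D i v < Suc (Suc n)} = insert i (\<Union>p\<in>ne V E i - {j}. {v\<in>Tr p i. D p v < Suc n})"
  proof
    show "{v\<in>Tr i j. D i v < Suc (Suc n)} \<subseteq> insert i (\<Union>p\<in>ne V E i - {j}. {v\<in>Tr p i. D p v < Suc n})"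
    proof
      fix v assume v: "v \<in> {v\<in>Tr i j. D i v < Suc (Suc n)}"
      show "v \<in> insert i (\<Union>p\<in>ne V E i - {j}. {v\<in>Tr p i. D p v < Suc n})"
      proof (cases "v = i")
        case False
        then obtain p where p: "p \<in> ne V E i - {j}" "v \<in> Tr p i" using v subtree[OF e] by blast
        then have "D i v = Suc (D p v)" using D_Tr ne_iff by blast
        then show ?thesis using p v by auto
      qed simp
    qed
    show "insert i (\<Union>p\<in>ne V E i - {j}. {v\<in>Tr p i. D p v < Suc n}) \<subseteq> {v\<in>Tr i j. D i v < Suc (Suc n)}"
    proof
      fix v assume v: "v \<in> insert i (\<Union>p\<in>ne V E i - {j}. {v\<in>Tr p i. D p v < Suc n})"
      show "v \<in> {v\<in>Tr i j. D i v < Suc (Suc n)}"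
      proof (cases "v = i")
        case True then show ?thesis using i_in_Tr[OF e] D_self by simp
      next
        case False
        then obtain p where p: "p \<in> ne V E i - {j}" "v \<in> Tr p i" "D p v < Suc n" using v by blast
        then have "D i v = Suc (D p v)" using D_Tr ne_iff by blast
        moreover have "v \<in> Tr i j" using p subtree[OF e] by blast
        ultimately show ?thesis using p by simp
      qed
    qed
  qed
  have nin: "i \<notin> (\<Union>p\<in>ne V E i - {j}. {v\<in>Tr p i. D p v < Suc n})"
    using partition(2)[OF iV] by blast
  have fin1: "finite (\<Union>p\<in>ne V E i - {j}. {v\<in>Tr p i. D p v < Suc n})"
    using fin_ne fin_Tr by auto
  have "(\<Sum>v\<in>{v\<in>Tr i j. D i v < Suc (Suc n)}. g v)
      = g i + (\<Sum>v\<in>(\<Union>p\<in>ne V E i - {j}. {v\<in>Tr p i. D p v < Suc n}). g v)"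
    unfolding seq using sum.insert[OF fin1 nin] by simp
  also have "(\<Sum>v\<in>(\<Union>p\<in>ne V E i - {j}. {v\<in>Tr p i. D p v < Suc n}). g v)
      = (\<Sum>p\<in>ne V E i - {j}. \<Sum>v\<in>{v\<in>Tr p i. D p v < Suc n}. g v)"
  proof (rule sum.UNION_disjoint)
    show "finite (ne V E i - {j})" using fin_ne by simp
    show "\<forall>p\<in>ne V E i - {j}. finite {v \<in> Tr p i. D p v < Suc n}" using fin_Tr by simp
    show "\<forall>p\<in>ne V E i - {j}. \<forall>q\<in>ne V E i - {j}. p \<noteq> q \<longrightarrow>
      {v \<in> Tr p i. D p v < Suc n} \<inter> {v \<in> Tr q i. D q v < Suc n} = {}"
      using partition(3)[OF iV] by blast
  qed
  finally show ?thesis .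
qed

lemma sum_root:
  assumes r: "r \<in> V"
  shows "(\<Sum>v\<in>V. g v) = g r + (\<Sum>j\<in>ne V E r. \<Sum>v\<in>Tr j r. g v)"
proof -
  have seq: "V = insert r (\<Union>p\<in>ne V E r. Tr p r)" by (rule partition(1)[OF r])
  have fin1: "finite (\<Union>p\<in>ne V E r. Tr p r)" using fin_ne fin_Tr by auto
  have "(\<Sum>v\<in>V. g v) = (\<Sum>v\<in>insert r (\<Union>p\<in>ne V E r. Tr p r). g v)"
    using arg_cong[OF seq, of "sum g"] .
  also have "\<dots> = g r + (\<Sum>v\<in>(\<Union>p\<in>ne V E r. Tr p r). g v)"
    using sum.insert[OF fin1 partition(2)[OF r]] by simp
  also have "(\<Sum>v\<in>(\<Union>p\<in>ne V E r. Tr p r). g v) = (\<Sum>j\<in>ne V E r. \<Sum>v\<in>Tr j r. g v)"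
  proof (rule sum.UNION_disjoint)
    show "finite (ne V E r)" using fin_ne by simp
    show "\<forall>p\<in>ne V E r. finite (Tr p r)" using fin_Tr by simp
    show "\<forall>p\<in>ne V E r. \<forall>q\<in>ne V E r. p \<noteq> q \<longrightarrow> Tr p r \<inter> Tr q r = {}"
      using partition(3)[OF r] by blast
  qed
  finally show ?thesis .
qed

lemma msgM_eq:
  "E i j \<Longrightarrow> msgM V E F (Suc n) i j = (\<Sum>v\<in>{v\<in>Tr i j. D i v < Suc n}. F v)"
proof (induction n arbitrary: i j)
  case 0
  have iV: "i \<in> V" using inV 0 by auto
  have "{v\<in>Tr i j. D i v < Suc 0} = {i}"
    using D_zero[OF iV] Tr_sub i_in_Tr[OF 0] D_self by auto
  then show ?case by simp
next
  case (Suc n)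
  have "msgM V E F (Suc (Suc n)) i j = F i + (\<Sum>p\<in>ne V E i - {j}. msgM V E F (Suc n) p i)"
    by simp
  also have "(\<Sum>p\<in>ne V E i - {j}. msgM V E F (Suc n) p i)
     = (\<Sum>p\<in>ne V E i - {j}. \<Sum>v\<in>{v\<in>Tr p i. D p v < Suc n}. F v)"
    by (rule sum.cong) (use Suc.IH ne_iff sym in auto)
  moreover have "(\<Sum>v\<in>{v\<in>Tr i j. D i v < Suc (Suc n)}. F v)
    = F i + (\<Sum>p\<in>ne V E i - {j}. \<Sum>v\<in>{v\<in>Tr p i. D p v < Suc n}. F v)"
    by (rule sum_step[OF Suc.prems])
  ultimately show ?case by simp
qed

lemma theta_Tr:
  assumes e: "E i j" and v: "v \<in> Tr i j"
  shows "theta_path E \<theta> j v = \<theta> j i + theta_path E \<theta> i v"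
proof -
  have vV: "v \<in> V" "j \<notin> set (P i v)" using v unfolding Tr_def by auto
  have iV: "i \<in> V" using inV e by auto
  have Pj: "P j v = j # P i v" using extend[of j i v] e sym vV by auto
  obtain rest where Pi: "P i v = i # rest" using hdP[OF iV vV(1)] by (cases "P i v") auto
  have "theta_path E \<theta> j v = (\<Sum>k<Suc (length rest). \<theta> ((j#i#rest)!k) ((j#i#rest)!Suc k))"
    unfolding theta_path_def Let_def Pj Pi by simp
  also have "\<dots> = \<theta> j i + (\<Sum>k<length rest. \<theta> ((i#rest)!k) ((i#rest)!Suc k))"
    by (subst sum.lessThan_Suc_shift) simp
  also have "\<dots> = \<theta> j i + theta_path E \<theta> i v"
    unfolding theta_path_def Let_def Pi by simp
  finally show ?thesis .
qed

lemma theta_self: "theta_path E \<theta> u u = 0"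
  unfolding theta_path_def Let_def P_self by simp

lemma msgD_eq:
  "E i j \<Longrightarrow> msgD V E F \<theta> (Suc n) i j = (\<Sum>v\<in>{v\<in>Tr i j. D i v < Suc n}. F v *v theta_path E \<theta> j v)"
proof (induction n arbitrary: i j)
  case 0
  have iV: "i \<in> V" using inV 0 by auto
  have "{v\<in>Tr i j. D i v < Suc 0} = {i}"
    using D_zero[OF iV] Tr_sub i_in_Tr[OF 0] D_self by auto
  moreover have "theta_path E \<theta> j i = \<theta> j i"
    using theta_Tr[OF 0 i_in_Tr[OF 0], where \<theta>=\<theta>] theta_self[where \<theta>=\<theta>] by simp
  ultimately show ?case by simp
next
  case (Suc n)
  let ?S = "{v\<in>Tr i j. D i v < Suc (Suc n)}"
  have finS: "finite ?S" using fin_Tr by simp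
  have "msgD V E F \<theta> (Suc (Suc n)) i j
     = msgM V E F (Suc (Suc n)) i j *v \<theta> j i + (\<Sum>p\<in>ne V E i - {j}. msgD V E F \<theta> (Suc n) p i)"
    by simp
  also have "(\<Sum>p\<in>ne V E i - {j}. msgD V E F \<theta> (Suc n) p i)
     = (\<Sum>p\<in>ne V E i - {j}. \<Sum>v\<in>{v\<in>Tr p i. D p v < Suc n}. F v *v theta_path E \<theta> i v)"
    by (rule sum.cong) (use Suc.IH ne_iff sym in auto)
  also have "\<dots> = (\<Sum>v\<in>?S. F v *v theta_path E \<theta> i v)"
    using sum_step[OF Suc.prems, where n=n and g="\<lambda>v. F v *v theta_path E \<theta> i v"] theta_self[where \<theta>=\<theta> and u=i] by simp
  also have "msgM V E F (Suc (Suc n)) i j *v \<theta> j i = (\<Sum>v\<in>?S. F v *v \<theta> j i)"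
    unfolding msgM_eq[OF Suc.prems] using sum_mvmult[OF finS] by simp
  finally have "msgD V E F \<theta> (Suc (Suc n)) i j
     = (\<Sum>v\<in>?S. F v *v \<theta> j i + F v *v theta_path E \<theta> i v)"
    by (simp add: sum.distrib)
  also have "\<dots> = (\<Sum>v\<in>?S. F v *v theta_path E \<theta> j v)"
    by (rule sum.cong) (use theta_Tr[OF Suc.prems, where \<theta>=\<theta>] in \<open>auto simp: matrix_vector_right_distrib\<close>)
  finally show ?case .
qed

end


theorem lemma1:
  fixes V :: "'v set" and E :: "'v \<Rightarrow> 'v \<Rightarrow> bool"
    and F :: "'v \<Rightarrow> real^'d^'d" and \<theta> :: "'v \<Rightarrow> 'v \<Rightarrow> real^'d" and K :: nat
  assumes "is_tree V E"
    and "K \<ge> diameter V E"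
    and "r \<in> V"
  shows "(\<Sum>v\<in>V. F v) = F r + (\<Sum>j\<in>ne V E r. msgM V E F K j r)
       \<and> (\<Sum>v\<in>V. F v *v theta_path E \<theta> r v) = (\<Sum>j\<in>ne V E r. msgD V E F \<theta> K j r)"
proof -
  interpret tr V E by (simp add: tr_def assms(1))
  have finD: "finite {tree_dist E i j | i j. i \<in> V \<and> j \<in> V}"
  proof -
    have "{tree_dist E i j | i j. i \<in> V \<and> j \<in> V} = (\<lambda>(i,j). tree_dist E i j) ` (V \<times> V)" by auto
    then show ?thesis using fin by simp
  qed
  have Dle: "tree_dist E r v \<le> K" if "v \<in> V" for v
  proof -
    have "tree_dist E r v \<le> diameter V E"
      unfolding diameter_def using finD assms(3) that by (intro Max_ge) auto
    then show ?thesis using assms(2) by simp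
  qed
  have full: "{v\<in>Tr j r. tree_dist E j v < K} = Tr j r" if j: "j \<in> ne V E r" for j
  proof -
    have "tree_dist E j v < K" if v: "v \<in> Tr j r" for v
    proof -
      have "tree_dist E r v = Suc (tree_dist E j v)" using D_Tr j v ne_iff by blast
      moreover have "v \<in> V" using v Tr_sub by auto
      ultimately show ?thesis using Dle by fastforce
    qed
    then show ?thesis by auto
  qed
  have Kpos: "K = Suc (K - 1)" if j: "j \<in> ne V E r" for j
  proof -
    have "j \<in> Tr j r" using i_in_Tr j ne_iff sym by blast
    then have "{v\<in>Tr j r. tree_dist E j v < K} \<noteq> {}" using full[OF j] by auto
    then show ?thesis by auto
  qed
  have M: "msgM V E F K j r = (\<Sum>v\<in>Tr j r. F v)" if j: "j \<in> ne V E r" for j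
  proof -
    have "E j r" using j ne_iff sym by blast
    then show ?thesis using msgM_eq[OF \<open>E j r\<close>, where n="K - 1" and F=F] Kpos[OF j] full[OF j] by simp
  qed
  have Dm: "msgD V E F \<theta> K j r = (\<Sum>v\<in>Tr j r. F v *v theta_path E \<theta> r v)" if j: "j \<in> ne V E r" for j
  proof -
    have "E j r" using j ne_iff sym by blast
    then show ?thesis using msgD_eq[OF \<open>E j r\<close>, where n="K - 1" and F=F and \<theta>=\<theta>] Kpos[OF j] full[OF j] by simp
  qed
  show ?thesis
    using sum_root[OF assms(3), of F] sum_root[OF assms(3), of "\<lambda>v. F v *v theta_path E \<theta> r v"]
      M Dm theta_self[where \<theta>=\<theta> and u=r] by simp
qed

end
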